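(* Let $t$ be an integer and let $G$ be a topologically $t$-chromatic graph with at least one edge. Then for every field $\mathbb{F}$, \[\overline{\xi}_l(G,\mathbb{F}) \geq \lceil t/2 \rceil + 1.\]
   Context: All graphs are finite, simple and undirected. For a vertex $v$, $N(v)$ is the set of neighbors of $v$, and $\{v\}\cup N(v)$ is its closed neighborhood. For $x,y\in\mathbb{F}^t$, $\langle x,y\rangle=\sum_{i=1}^t x_iy_i$ (over $\mathbb{C}$ one may use $\sum_i x_i\overline{y_i}$). An orthogonal representation of $G=(V,E)$ over $\mathbb{F}$ is an assignment of a vector $u_v\in\mathbb{F}^t$ (for some $t$) to every $v\in V$ such that $\langle u_v,u_v\rangle\neq 0$ for every $v$ and $\langle u_v,u_{v'}\rangle=0$ whenever $v,v'$ are adjacent. Its locality is $\max_{v\in V}\dim\big(\mathrm{span}\{u_{v'} : v'\in\{v\}\cup N(v)\}\big)$. The local orthogonality dimension $\overline{\xi}_l(G,\mathbb{F})$ is the minimum locality of an orthogonal representation of $G$ over $\mathbb{F}$. A graph $G$ is called topologically $t$-chromatic if $t\le \mathrm{Xind}(\mathrm{Hom}(K_2,G))+2$, where $\mathrm{Hom}(K_2,G)$ is the homomorphism complex of $K_2$ in $G$ (a free $\mathbb{Z}_2$-complex) and $\mathrm{Xind}$ denotes its cross-index (as in Simonyi–Tardif–Zsbán). *)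

theory Defs
  imports Complex_Main "HOL-Library.Function_Algebras"
begin

definition simple_graph :: "'v set \<Rightarrow> ('v \<Rightarrow> 'v \<Rightarrow> bool) \<Rightarrow> bool" where
  "simple_graph V E \<longleftrightarrow> finite V \<and>
     (\<forall>x y. E x y \<longrightarrow> x \<in> V \<and> y \<in> V \<and> x \<noteq> y \<and> E y x)"

definition nbhd :: "('v \<Rightarrow> 'v \<Rightarrow> bool) \<Rightarrow> 'v \<Rightarrow> 'v set" where
  "nbhd E v = {w. E v w}"

text \<open>Face poset of the homomorphism complex Hom(K_2,G): cells are pairs (A,B) of nonempty
  vertex sets with every vertex of A adjacent to every vertex of B, ordered componentwise,
  with the free Z_2-action swapping the two components.\<close>
definition hom_K2_cells :: "'v set \<Rightarrow> ('v \<Rightarrow> 'v \<Rightarrow> bool) \<Rightarrow> ('v set \<times> 'v set) set" where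
  "hom_K2_cells V E = {(A, B). A \<noteq> {} \<and> B \<noteq> {} \<and> A \<subseteq> V \<and> B \<subseteq> V \<and>
                              (\<forall>a\<in>A. \<forall>b\<in>B. E a b)}"

definition cell_le :: "('v set \<times> 'v set) \<Rightarrow> ('v set \<times> 'v set) \<Rightarrow> bool" where
  "cell_le c c' \<longleftrightarrow> fst c \<subseteq> fst c' \<and> snd c \<subseteq> snd c'"

definition cell_swap :: "('v set \<times> 'v set) \<Rightarrow> ('v set \<times> 'v set)" where
  "cell_swap c = (snd c, fst c)"

text \<open>The Z_2-poset Q_d of Simonyi--Tardif--Zsban: elements +-1,...,+-(d+1),
  x < y iff |x| < |y|, involution x \<mapsto> -x.\<close>
definition Q_poset :: "nat \<Rightarrow> int set" where
  "Q_poset d = {x. 1 \<le> \<bar>x\<bar> \<and> \<bar>x\<bar> \<le> int d + 1}"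

definition Q_le :: "int \<Rightarrow> int \<Rightarrow> bool" where
  "Q_le x y \<longleftrightarrow> x = y \<or> \<bar>x\<bar> < \<bar>y\<bar>"

definition Z2_poset_map :: "'v set \<Rightarrow> ('v \<Rightarrow> 'v \<Rightarrow> bool) \<Rightarrow> nat \<Rightarrow> ('v set \<times> 'v set \<Rightarrow> int) \<Rightarrow> bool" where
  "Z2_poset_map V E d f \<longleftrightarrow>
     (\<forall>c\<in>hom_K2_cells V E. f c \<in> Q_poset d \<and> f (cell_swap c) = - f c) \<and>
     (\<forall>c\<in>hom_K2_cells V E. \<forall>c'\<in>hom_K2_cells V E. cell_le c c' \<longrightarrow> Q_le (f c) (f c'))"

definition Xind_Hom_K2 :: "'v set \<Rightarrow> ('v \<Rightarrow> 'v \<Rightarrow> bool) \<Rightarrow> nat" where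
  "Xind_Hom_K2 V E = (LEAST d. \<exists>f. Z2_poset_map V E d f)"

definition topologically_chromatic :: "'v set \<Rightarrow> ('v \<Rightarrow> 'v \<Rightarrow> bool) \<Rightarrow> int \<Rightarrow> bool" where
  "topologically_chromatic V E t \<longleftrightarrow> t \<le> int (Xind_Hom_K2 V E) + 2"

text \<open>Vectors of F^k are modelled as functions nat \<Rightarrow> F vanishing outside {..<k}.\<close>
definition fscale :: "'f::field \<Rightarrow> (nat \<Rightarrow> 'f) \<Rightarrow> (nat \<Rightarrow> 'f)" where
  "fscale c x = (\<lambda>i. c * x i)"

definition inner_k :: "nat \<Rightarrow> (nat \<Rightarrow> 'f::field) \<Rightarrow> (nat \<Rightarrow> 'f) \<Rightarrow> 'f" where
  "inner_k k x y = (\<Sum>i<k. x i * y i)"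

definition orth_rep :: "'v set \<Rightarrow> ('v \<Rightarrow> 'v \<Rightarrow> bool) \<Rightarrow> nat \<Rightarrow> ('v \<Rightarrow> nat \<Rightarrow> 'f::field) \<Rightarrow> bool" where
  "orth_rep V E k u \<longleftrightarrow>
     (\<forall>v\<in>V. \<forall>i. k \<le> i \<longrightarrow> u v i = 0) \<and>
     (\<forall>v\<in>V. inner_k k (u v) (u v) \<noteq> 0) \<and>
     (\<forall>v w. E v w \<longrightarrow> inner_k k (u v) (u w) = 0)"

definition locality :: "'v set \<Rightarrow> ('v \<Rightarrow> 'v \<Rightarrow> bool) \<Rightarrow> ('v \<Rightarrow> nat \<Rightarrow> 'f::field) \<Rightarrow> nat" where
  "locality V E u = Max ((\<lambda>v. vector_space.dim fscale (u ` ({v} \<union> nbhd E v))) ` V)"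

definition local_orth_dim :: "'v set \<Rightarrow> ('v \<Rightarrow> 'v \<Rightarrow> bool) \<Rightarrow> 'f::field itself \<Rightarrow> nat" where
  "local_orth_dim V E F =
     (LEAST m. \<exists>k (u :: 'v \<Rightarrow> nat \<Rightarrow> 'f). orth_rep V E k u \<and> locality V E u = m)"

end

theory Submission imports Defs begin

lemma vs: "vector_space (fscale :: 'f::field \<Rightarrow> (nat \<Rightarrow> 'f) \<Rightarrow> _)"
  by unfold_locales (auto simp: fscale_def fun_eq_iff algebra_simps)

lemma ms: "module (fscale :: 'f::field \<Rightarrow> (nat \<Rightarrow> 'f) \<Rightarrow> _)"
  using vs by (simp add: module_iff_vector_space)

context vector_space begin

lemma dim_mono_fin:
  assumes "finite W" "V \<subseteq> span W" shows "dim V \<le> dim W"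
proof -
  obtain B where B: "B \<subseteq> W" "independent B" "W \<subseteq> span B" "card B = dim W"
    using basis_exists by blast
  have "V \<subseteq> span B" using assms(2) B(3)
    by (metis span_mono span_span subset_trans)
  moreover have "finite B" using B(1) assms(1) finite_subset by blast
  ultimately show ?thesis using dim_le_card B(4) by metis
qed

lemma dim_insert_fin:
  assumes "finite S" "x \<notin> span S" shows "dim (insert x S) = Suc (dim S)"
proof -
  obtain B where B: "B \<subseteq> S" "independent B" "S \<subseteq> span B" "card B = dim S"
    using basis_exists by blast
  have fB: "finite B" using B(1) assms(1) finite_subset by blast
  have sB: "span B = span S" using B by (metis span_eq span_superset subset_trans)
  have "x \<notin> span B" using sB assms(2) by simp
  hence xB: "x \<notin> B" using span_superset by blast
  show ?thesis
  proof (rule dim_unique[of "insert x B"])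
    show "insert x B \<subseteq> insert x S" using B by blast
    show "insert x S \<subseteq> span (insert x B)"
      using B(3) span_superset span_mono
      by (metis insert_mono subset_insertI subset_trans span_span insertI1 insert_subset)
    show "independent (insert x B)" using independent_insertI \<open>x \<notin> span B\<close> B(2) by blast
    show "card (insert x B) = Suc (dim S)" using fB xB B(4) by simp
  qed
qed

lemma dim_eq_span_fin:
  assumes "finite T" "S \<subseteq> T" "dim T \<le> dim S" shows "span S = span T"
proof (rule ccontr)
  assume ne: "span S \<noteq> span T"
  have "\<not> T \<subseteq> span S"
  proof
    assume "T \<subseteq> span S"
    moreover have "S \<subseteq> span T" using assms(2) span_superset by (rule subset_trans)
    ultimately have "span S = span T" by (simp only: span_eq)
    with ne show False by contradiction
  qed
  then obtain x where x: "x \<in> T" "x \<notin> span S" by (auto simp only: subset_iff)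
  have fS: "finite S" using assms(1,2) by (rule rev_finite_subset)
  have "dim (insert x S) = Suc (dim S)" using dim_insert_fin[OF fS x(2)] .
  moreover have "insert x S \<subseteq> span T"
    using x(1) assms(2) span_superset by (auto simp only: insert_subset subset_iff)
  then have "dim (insert x S) \<le> dim T"
    using dim_mono_fin[OF assms(1)] by (simp only:)
  ultimately show False using assms(3) by simp
qed

lemma dim_pos:
  assumes "finite S" "x \<in> S" "x \<noteq> 0" shows "1 \<le> dim S"
proof -
  have "x \<notin> span {}" using assms(3) by (simp only: span_empty singleton_iff simp_thms)
  then have "independent {x}" using independent_insertI[OF _ independent_empty] by blast
  then have "dim {x} = card {x}" by (rule dim_eq_card_independent)
  then have d1: "dim {x} = 1" by simp
  have "{x} \<subseteq> span S" using assms(2) span_superset by blast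
  then have "dim {x} \<le> dim S" by (rule dim_mono_fin[OF assms(1)])
  then show ?thesis using d1 by simp
qed

end

lemma inner_lin: "inner_k k (fscale c x + y) w = c * inner_k k x w + inner_k k y w"
  unfolding inner_k_def fscale_def plus_fun_def
  by (simp add: sum_distrib_left sum.distrib distrib_right mult.assoc)

lemma span_orth:
  assumes "x \<in> module.span (fscale :: 'f::field \<Rightarrow> _) S" "\<forall>s\<in>S. inner_k k s w = 0"
  shows "inner_k k x w = 0"
proof -
  have "\<And>c a y. a \<in> S \<Longrightarrow> inner_k k y w = 0 \<Longrightarrow> inner_k k (fscale c a + y) w = 0"
    using assms(2) by (simp add: inner_lin)
  moreover have "inner_k k 0 w = 0" by (simp add: inner_k_def)
  ultimately show ?thesis
    using module.span_induct_alt[OF ms assms(1), of "\<lambda>x. inner_k k x w = 0"] by blast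
qed

lemma cell_facts:
  fixes u :: "'v \<Rightarrow> nat \<Rightarrow> 'f::field"
  assumes sg: "simple_graph V E" and orth: "orth_rep V E k u"
    and c: "(A, B) \<in> hom_K2_cells V E"
  shows "1 \<le> vector_space.dim fscale (u ` A)"
    and "vector_space.dim fscale (u ` B) + 1 \<le> locality V E u"
    and "module.span fscale (u ` A) \<noteq> module.span fscale (u ` B)"
    and "finite (u ` A)"
proof -
  have cA: "A \<noteq> {}" "B \<noteq> {}" "A \<subseteq> V" "B \<subseteq> V" "\<forall>a\<in>A. \<forall>b\<in>B. E a b"
    using c unfolding hom_K2_cells_def by auto
  have fin: "finite V" using sg unfolding simple_graph_def by blast
  have sym: "\<And>x y. E x y \<Longrightarrow> E y x" using sg unfolding simple_graph_def by blast
  obtain a where a: "a \<in> A" using cA(1) by blast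
  have aV: "a \<in> V" using a cA(3) by blast
  have nz: "inner_k k (u a) (u a) \<noteq> 0" using orth aV unfolding orth_rep_def by blast
  have orthE: "\<And>x y. E x y \<Longrightarrow> inner_k k (u x) (u y) = 0" using orth unfolding orth_rep_def by blast
  have fB: "finite (u ` B)" using fin cA(4) by (meson finite_imageI finite_subset)
  show "finite (u ` A)" using fin cA(3) by (meson finite_imageI finite_subset)
  have notin: "u a \<notin> module.span fscale (u ` B)"
  proof
    assume h: "u a \<in> module.span fscale (u ` B)"
    have "\<forall>s\<in>u ` B. inner_k k s (u a) = 0"
      using cA(5) a orthE sym by blast
    then have "inner_k k (u a) (u a) = 0" using span_orth[OF h] by blast
    then show False using nz by blast
  qed
  have ins: "vector_space.dim fscale (insert (u a) (u ` B)) = Suc (vector_space.dim fscale (u ` B))"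
    using vector_space.dim_insert_fin[OF vs fB notin] .
  have fN: "finite (u ` ({a} \<union> nbhd E a))"
  proof -
    have "nbhd E a \<subseteq> V" using sg unfolding simple_graph_def nbhd_def by blast
    then show ?thesis using fin by (meson finite_Un finite_imageI finite_insert finite.emptyI finite_subset)
  qed
  have sub: "insert (u a) (u ` B) \<subseteq> u ` ({a} \<union> nbhd E a)"
    using cA(5) a unfolding nbhd_def by blast
  have "insert (u a) (u ` B) \<subseteq> module.span fscale (u ` ({a} \<union> nbhd E a))"
    using sub module.span_superset[OF ms] by blast
  then have le1: "vector_space.dim fscale (insert (u a) (u ` B)) \<le> vector_space.dim fscale (u ` ({a} \<union> nbhd E a))"
    using vector_space.dim_mono_fin[OF vs fN] by blast
  have le2: "vector_space.dim fscale (u ` ({a} \<union> nbhd E a)) \<le> locality V E u"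
    unfolding locality_def using fin aV by (intro Max_ge) auto
  show "vector_space.dim fscale (u ` B) + 1 \<le> locality V E u" using ins le1 le2 by simp
  have "u a \<noteq> 0" using nz unfolding inner_k_def by auto
  then show "1 \<le> vector_space.dim fscale (u ` A)"
    using vector_space.dim_pos[OF vs \<open>finite (u ` A)\<close>] a by blast
  have "u a \<in> module.span fscale (u ` A)" using a module.span_superset[OF ms] by blast
  then show "module.span fscale (u ` A) \<noteq> module.span fscale (u ` B)" using notin by blast
qed

lemma wo_sign:
  assumes "Well_order r" "Field r = UNIV" "X \<noteq> Y"
  shows "((X, Y) \<in> r) = ((Y, X) \<notin> r)"
proof -
  have lo: "linear_order_on (Field r) r" using assms(1) by (simp only: well_order_on_def)
  have t: "total_on (Field r) r" using lo by (simp only: linear_order_on_def)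
  have an: "antisym r" using lo by (simp only: linear_order_on_def partial_order_on_def)
  have "(X, Y) \<in> r \<or> (Y, X) \<in> r" using t assms(2,3) unfolding total_on_def by simp
  moreover have "\<not> ((X, Y) \<in> r \<and> (Y, X) \<in> r)"
  proof
    assume "(X, Y) \<in> r \<and> (Y, X) \<in> r"
    then have "X = Y" using an unfolding antisym_def by blast
    then show False using assms(3) by contradiction
  qed
  ultimately show ?thesis by blast
qed

lemma abs_ite: "0 \<le> (m::int) \<Longrightarrow> \<bar>if P then m else - m\<bar> = m"
  by simp

lemma rep_bound:
  fixes u :: "'v \<Rightarrow> nat \<Rightarrow> 'f::field"
  assumes sg: "simple_graph V E" and edge: "\<exists>x y. E x y"
    and orth: "orth_rep V E k u"
  shows "Xind_Hom_K2 V E + 2 \<le> 2 * locality V E u - 2 \<and> 2 \<le> locality V E u"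
proof -
  define d where "d = locality V E u"
  define D where "D X = vector_space.dim fscale (u ` X)" for X
  define SP where "SP X = module.span fscale (u ` X)" for X
  from well_ordering obtain r :: "(nat \<Rightarrow> 'f) set rel" where rr: "Well_order r \<and> Field r = UNIV"
    by (rule exE)
  have r: "Well_order r" "Field r = UNIV" using rr by (rule conjunct1, rule conjunct2)
  define f where "f c = (let a = D (fst c); b = D (snd c); m = int a + int b - 1 in
     if b < a \<or> (a = b \<and> (SP (fst c), SP (snd c)) \<in> r) then m else - m)" for c
  have symE: "\<And>x y. E x y \<Longrightarrow> E y x" using sg unfolding simple_graph_def by blast
  have cellsym: "(B, A) \<in> hom_K2_cells V E" if "(A, B) \<in> hom_K2_cells V E" for A B
  proof -
    from that have h: "A \<noteq> {} \<and> B \<noteq> {} \<and> A \<subseteq> V \<and> B \<subseteq> V \<and> (\<forall>a\<in>A. \<forall>b\<in>B. E a b)"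
      unfolding hom_K2_cells_def by simp
    then have "\<forall>b\<in>B. \<forall>a\<in>A. E b a" using symE by blast
    then show ?thesis using h unfolding hom_K2_cells_def by simp
  qed
  have F: "1 \<le> D A" "D B + 1 \<le> d" "SP A \<noteq> SP B" "1 \<le> D B" "D A + 1 \<le> d"
    if "(A, B) \<in> hom_K2_cells V E" for A B
  proof -
    note c1 = cell_facts[OF sg orth that] and c2 = cell_facts[OF sg orth cellsym[OF that]]
    show "1 \<le> D A" using c1(1) unfolding D_def .
    show "D B + 1 \<le> d" using c1(2) unfolding D_def d_def .
    show "SP A \<noteq> SP B" using c1(3) unfolding SP_def .
    show "1 \<le> D B" using c2(1) unfolding D_def .
    show "D A + 1 \<le> d" using c2(2) unfolding D_def d_def .
  qed
  obtain x y where xy: "E x y" using edge by blast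
  have "x \<in> V \<and> y \<in> V" using sg xy unfolding simple_graph_def by blast
  then have "({x}, {y}) \<in> hom_K2_cells V E" using xy unfolding hom_K2_cells_def by simp
  from F[OF this] have d2: "2 \<le> d" by simp
  have fabs: "\<bar>f (A, B)\<bar> = int (D A) + int (D B) - 1" if "(A, B) \<in> hom_K2_cells V E" for A B
  proof -
    have "0 \<le> int (D A) + int (D B) - 1" using F(1)[OF that] by simp
    then show ?thesis unfolding f_def Let_def fst_conv snd_conv by (rule abs_ite)
  qed
  have i4: "int (2 * d - 4) = 2 * int d - 4" using d2 by simp
  have mapf: "Z2_poset_map V E (2 * d - 4) f"
    unfolding Z2_poset_map_def
  proof (intro conjI ballI impI)
    fix c assume c: "c \<in> hom_K2_cells V E"
    obtain A B where cAB: "c = (A, B)" by (cases c)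
    note FF = F[OF c[unfolded cAB]]
    have fa: "\<bar>f c\<bar> = int (D A) + int (D B) - 1" using fabs c unfolding cAB by blast
    show "f c \<in> Q_poset (2 * d - 4)"
      unfolding Q_poset_def mem_Collect_eq i4 fa using FF by linarith
    have sg': "((SP A, SP B) \<in> r) = ((SP B, SP A) \<notin> r)" using wo_sign[OF r FF(3)] .
    show "f (cell_swap c) = - f c"
    proof -
      have fAB: "f (A, B) = (if D B < D A \<or> (D A = D B \<and> (SP A, SP B) \<in> r)
          then int (D A) + int (D B) - 1 else - (int (D A) + int (D B) - 1))"
        by (simp only: f_def Let_def fst_conv snd_conv)
      have fBA: "f (B, A) = (if D A < D B \<or> (D B = D A \<and> (SP B, SP A) \<in> r)
          then int (D B) + int (D A) - 1 else - (int (D B) + int (D A) - 1))"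
        by (simp only: f_def Let_def fst_conv snd_conv)
      show ?thesis unfolding cAB cell_swap_def fst_conv snd_conv fAB fBA
        using sg' by (cases rule: linorder_cases[of "D A" "D B"]) (simp_all add: add.commute)
    qed
  next
    fix c c' assume c: "c \<in> hom_K2_cells V E" and c': "c' \<in> hom_K2_cells V E" and le: "cell_le c c'"
    obtain A B where cAB: "c = (A, B)" by (cases c)
    obtain A' B' where cAB': "c' = (A', B')" by (cases c')
    have sub: "A \<subseteq> A'" "B \<subseteq> B'" using le unfolding cell_le_def cAB cAB' by auto
    have finV: "finite V" using sg unfolding simple_graph_def by blast
    have AB': "A' \<subseteq> V" "B' \<subseteq> V" using c' unfolding cAB' hom_K2_cells_def by auto
    have fin: "finite (u ` A')" "finite (u ` B')"
      using AB' finV by (meson finite_imageI finite_subset)+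
    have s1: "u ` A \<subseteq> module.span fscale (u ` A')" "u ` B \<subseteq> module.span fscale (u ` B')"
      using sub module.span_superset[OF ms] by blast+
    have m1: "D A \<le> D A'" "D B \<le> D B'"
      unfolding D_def using vector_space.dim_mono_fin[OF vs fin(1) s1(1)]
        vector_space.dim_mono_fin[OF vs fin(2) s1(2)] by auto
    note FF = F[OF c[unfolded cAB]] and FF' = F[OF c'[unfolded cAB']]
    show "Q_le (f c) (f c')"
    proof (cases "D A = D A' \<and> D B = D B'")
      case True
      have i1: "u ` A \<subseteq> u ` A'" using sub(1) by (rule image_mono)
      have i2: "u ` B \<subseteq> u ` B'" using sub(2) by (rule image_mono)
      have "SP A = SP A'" unfolding SP_def
        using vector_space.dim_eq_span_fin[OF vs fin(1) i1] True unfolding D_def by simp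
      moreover have "SP B = SP B'" unfolding SP_def
        using vector_space.dim_eq_span_fin[OF vs fin(2) i2] True unfolding D_def by simp
      ultimately have "f c = f c'" using True unfolding f_def cAB cAB' Let_def fst_conv snd_conv
        by (simp only:)
      then show ?thesis unfolding Q_le_def by simp
    next
      case False
      then have lt: "D A + D B < D A' + D B'" using m1 by auto
      have "\<bar>f c\<bar> = int (D A) + int (D B) - 1" using fabs c unfolding cAB by blast
      moreover have "\<bar>f c'\<bar> = int (D A') + int (D B') - 1" using fabs c' unfolding cAB' by blast
      ultimately show ?thesis using lt unfolding Q_le_def by simp
    qed
  qed
  have "Xind_Hom_K2 V E \<le> 2 * d - 4"
    unfolding Xind_Hom_K2_def by (rule Least_le) (rule exI, rule mapf)
  then show ?thesis using d2 unfolding d_def[symmetric] by arith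
qed

lemma rep_exists:
  assumes sg: "simple_graph V E"
  shows "\<exists>k (u :: 'v \<Rightarrow> nat \<Rightarrow> 'f::field). orth_rep V E k u"
proof -
  have fin: "finite V" using sg unfolding simple_graph_def by blast
  obtain h where h: "bij_betw h V {0..<card V}" using ex_bij_betw_finite_nat[OF fin] by blast
  define u :: "'v \<Rightarrow> nat \<Rightarrow> 'f" where "u v = (\<lambda>i. if i = h v then 1 else 0)" for v
  have hv: "h v < card V" if "v \<in> V" for v using h that unfolding bij_betw_def by auto
  have "orth_rep V E (card V) u"
    unfolding orth_rep_def
  proof (intro conjI ballI allI impI)
    fix v i assume "v \<in> V" "card V \<le> i"
    then show "u v i = 0" using hv unfolding u_def by fastforce
  next
    fix v assume v: "v \<in> V"
    have "inner_k (card V) (u v) (u v) = (\<Sum>i<card V. if i = h v then 1 else 0)"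
      unfolding inner_k_def u_def by (intro sum.cong) auto
    also have "\<dots> = 1" using hv[OF v] by simp
    finally show "inner_k (card V) (u v) (u v) \<noteq> 0" by simp
  next
    fix v w assume e: "E v w"
    have "v \<in> V" "w \<in> V" "v \<noteq> w" using e sg unfolding simple_graph_def by blast+
    then have "h v \<noteq> h w" using h unfolding bij_betw_def inj_on_def by blast
    then show "inner_k (card V) (u v) (u w) = 0"
      unfolding inner_k_def u_def by (intro sum.neutral) auto
  qed
  then show ?thesis by blast
qed

theorem mainTheorem1:
  fixes V :: "'v set" and E :: "'v \<Rightarrow> 'v \<Rightarrow> bool" and t :: int
  assumes "simple_graph V E"
    and "\<exists>x y. E x y"
    and "topologically_chromatic V E t"
  shows "int (local_orth_dim V E TYPE('f::field)) \<ge> \<lceil>real_of_int t / 2\<rceil> + 1"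
proof -
  define P where "P m = (\<exists>k (u :: 'v \<Rightarrow> nat \<Rightarrow> 'f). orth_rep V E k u \<and> locality V E u = m)" for m
  obtain k0 and u0 :: "'v \<Rightarrow> nat \<Rightarrow> 'f" where "orth_rep V E k0 u0"
    using rep_exists[OF assms(1)] by blast
  then have "P (locality V E u0)" unfolding P_def by blast
  then have "P (LEAST m. P m)" by (rule LeastI)
  then obtain k and u :: "'v \<Rightarrow> nat \<Rightarrow> 'f" where ou: "orth_rep V E k u"
      and lu: "locality V E u = (LEAST m. P m)"
    unfolding P_def by blast
  have lod: "local_orth_dim V E TYPE('f) = locality V E u"
    unfolding local_orth_dim_def lu P_def ..
  have rb: "Xind_Hom_K2 V E + 2 \<le> 2 * locality V E u - 2 \<and> 2 \<le> locality V E u"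
    by (rule rep_bound[OF assms(1,2) ou])
  have "t \<le> int (Xind_Hom_K2 V E) + 2" using assms(3) unfolding topologically_chromatic_def .
  then have tb: "t \<le> 2 * int (locality V E u) - 2" using rb by linarith
  have "real_of_int t / 2 \<le> real_of_int (int (locality V E u) - 1)"
    using tb by (simp add: field_simps) linarith?
  then have "\<lceil>real_of_int t / 2\<rceil> \<le> int (locality V E u) - 1" by (simp only: ceiling_le_iff)
  then show ?thesis unfolding lod by linarith
qed

end
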